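(* Let $G=(V,E)$ be a finite, simple, connected graph such that $\kappa(x,y)\geq K>0$ for all adjacent vertices $x\sim y$. Then \[ \operatorname{diam}_{\operatorname{eff}}(G)\leq \frac{\max_{v\in V}\operatorname{Deg}(v)}{K}. \]
   Context: $d$ denotes the combinatorial graph distance and $\operatorname{Deg}(v)=|\{w\in V: w\sim v\}|$. The effective diameter is $\operatorname{diam}_{\operatorname{eff}}(G)=\frac{1}{|V|^2}\sum_{x,y\in V}d(x,y)$. The (non-normalized) Laplacian is $\Delta f(x)=\sum_{y\sim x}(f(y)-f(x))$ for $f:V\to\mathbb{R}$. The Ollivier curvature of an edge $x\sim y$ is $\kappa(x,y)=\inf\{\Delta f(x)-\Delta f(y) : f:V\to\mathbb{R},\ f(y)-f(x)=1,\ \max_{u\sim v}|f(u)-f(v)|=1\}$. *)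

theory Defs
  imports Complex_Main
begin

definition finite_simple_graph :: "'a set \<Rightarrow> ('a \<Rightarrow> 'a \<Rightarrow> bool) \<Rightarrow> bool" where
  "finite_simple_graph V E \<longleftrightarrow> finite V \<and>
     (\<forall>x y. E x y \<longrightarrow> x \<in> V \<and> y \<in> V) \<and>
     (\<forall>x y. E x y \<longrightarrow> E y x) \<and> (\<forall>x. \<not> E x x)"

definition walk :: "('a \<Rightarrow> 'a \<Rightarrow> bool) \<Rightarrow> 'a list \<Rightarrow> bool" where
  "walk E xs \<longleftrightarrow> xs \<noteq> [] \<and> (\<forall>i. Suc i < length xs \<longrightarrow> E (xs ! i) (xs ! Suc i))"

definition connected_graph :: "'a set \<Rightarrow> ('a \<Rightarrow> 'a \<Rightarrow> bool) \<Rightarrow> bool" where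
  "connected_graph V E \<longleftrightarrow> V \<noteq> {} \<and>
     (\<forall>x\<in>V. \<forall>y\<in>V. \<exists>xs. walk E xs \<and> hd xs = x \<and> last xs = y)"

definition gdist :: "('a \<Rightarrow> 'a \<Rightarrow> bool) \<Rightarrow> 'a \<Rightarrow> 'a \<Rightarrow> nat" where
  "gdist E x y = (LEAST n. \<exists>xs. walk E xs \<and> hd xs = x \<and> last xs = y \<and> length xs = Suc n)"

definition Deg :: "'a set \<Rightarrow> ('a \<Rightarrow> 'a \<Rightarrow> bool) \<Rightarrow> 'a \<Rightarrow> nat" where
  "Deg V E v = card {w \<in> V. E v w}"

definition diam_eff :: "'a set \<Rightarrow> ('a \<Rightarrow> 'a \<Rightarrow> bool) \<Rightarrow> real" where
  "diam_eff V E = (1 / (real (card V))^2) * (\<Sum>x\<in>V. \<Sum>y\<in>V. real (gdist E x y))"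

definition laplacian :: "'a set \<Rightarrow> ('a \<Rightarrow> 'a \<Rightarrow> bool) \<Rightarrow> ('a \<Rightarrow> real) \<Rightarrow> 'a \<Rightarrow> real" where
  "laplacian V E f x = (\<Sum>y\<in>{y \<in> V. E x y}. f y - f x)"

text \<open>Ollivier curvature of an edge x ~ y (Muench--Wojciechowski formula).\<close>
definition ollivier_curvature :: "'a set \<Rightarrow> ('a \<Rightarrow> 'a \<Rightarrow> bool) \<Rightarrow> 'a \<Rightarrow> 'a \<Rightarrow> real" where
  "ollivier_curvature V E x y = Inf {laplacian V E f x - laplacian V E f y | f.
      f y - f x = 1 \<and> Max {\<bar>f u - f v\<bar> | u v. u \<in> V \<and> v \<in> V \<and> E u v} = 1}"

end

theory Submission
  imports Defs
begin

lemma walk_exists: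
  assumes "connected_graph V E" "x \<in> V" "y \<in> V"
  shows "\<exists>n xs. walk E xs \<and> hd xs = x \<and> last xs = y \<and> length xs = Suc n"
proof -
  obtain xs where "walk E xs" "hd xs = x" "last xs = y"
    using assms unfolding connected_graph_def by blast
  moreover have "length xs = Suc (length xs - 1)" using \<open>walk E xs\<close>
    unfolding walk_def by (cases xs) auto
  ultimately show ?thesis by blast
qed

lemma gdist_spec:
  assumes "connected_graph V E" "x \<in> V" "y \<in> V"
  shows "\<exists>xs. walk E xs \<and> hd xs = x \<and> last xs = y \<and> length xs = Suc (gdist E x y)"
  unfolding gdist_def using walk_exists[OF assms] by (rule LeastI_ex)

lemma gdist_le:
  assumes "walk E xs" "hd xs = x" "last xs = y" "length xs = Suc n"
  shows "gdist E x y \<le> n"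
  unfolding gdist_def using assms by (intro Least_le) blast

lemma gdist_self: "gdist E z z = 0"
proof -
  have "walk E [z]" unfolding walk_def by auto
  then have "gdist E z z \<le> 0" by (rule gdist_le) auto
  then show ?thesis by simp
qed

lemma gdist_zero:
  assumes "connected_graph V E" "x \<in> V" "y \<in> V" "gdist E x y = 0"
  shows "x = y"
proof -
  obtain xs where "walk E xs" "hd xs = x" "last xs = y" "length xs = Suc 0"
    using gdist_spec[OF assms(1-3)] assms(4) by auto
  then show ?thesis by (cases xs) auto
qed

lemma gdist_edge:
  assumes "connected_graph V E" "E u v" "v \<in> V" "z \<in> V"
  shows "gdist E u z \<le> gdist E v z + 1"
proof -
  obtain xs where xs: "walk E xs" "hd xs = v" "last xs = z" "length xs = Suc (gdist E v z)"
    using gdist_spec[OF assms(1,3,4)] by auto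
  have ne: "xs \<noteq> []" using xs(1) unfolding walk_def by auto
  have "walk E (u # xs)" unfolding walk_def
  proof (intro conjI allI impI)
    fix i assume i: "Suc i < length (u # xs)"
    show "E ((u # xs) ! i) ((u # xs) ! Suc i)"
    proof (cases i)
      case 0 then show ?thesis using assms(2) xs(2) ne by (simp add: hd_conv_nth)
    next
      case (Suc j) then show ?thesis using xs(1) i unfolding walk_def by auto
    qed
  qed simp
  moreover have "last (u # xs) = z" using ne xs(3) by simp
  moreover have "length (u # xs) = Suc (gdist E v z + 1)" using xs(4) by simp
  ultimately show ?thesis by (intro gdist_le[of E "u # xs"]) auto
qed

lemma gdist_step:
  assumes "finite_simple_graph V E" "connected_graph V E" "x \<in> V" "z \<in> V"
    "gdist E x z = Suc m"
  shows "\<exists>x1. E x x1 \<and> gdist E x1 z = m"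
proof -
  obtain xs where xs: "walk E xs" "hd xs = x" "last xs = z" "length xs = Suc (Suc m)"
    using gdist_spec[OF assms(2-4)] assms(5) by auto
  have ne: "xs \<noteq> []" using xs(4) by auto
  have e0: "E (xs ! 0) (xs ! Suc 0)" using xs(1,4) unfolding walk_def by auto
  have e: "E x (xs ! 1)" using e0 xs(2) ne by (simp add: hd_conv_nth)
  have "walk E (tl xs)" using xs(1,4) unfolding walk_def by (cases xs) auto
  moreover have "tl xs \<noteq> []" using xs(4) by (cases xs) auto
  then have "hd (tl xs) = xs ! 1" by (cases xs) (auto simp: hd_conv_nth)
  moreover have "last (tl xs) = z" using xs(3,4) by (cases xs) auto
  moreover have "length (tl xs) = Suc m" using xs(4) by simp
  ultimately have le: "gdist E (xs ! 1) z \<le> m" by (intro gdist_le) auto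
  have "xs ! 1 \<in> V" using e assms(1) unfolding finite_simple_graph_def by blast
  then have "Suc m \<le> gdist E (xs ! 1) z + 1" using gdist_edge[OF assms(2) e _ assms(4)] assms(5) by simp
  with le e show ?thesis by auto
qed

lemma laplacian_sum_zero:
  assumes "finite_simple_graph V E"
  shows "(\<Sum>x\<in>V. laplacian V E g x) = 0"
proof -
  have fin: "finite V" using assms unfolding finite_simple_graph_def by auto
  have sym: "\<And>x y. E x y = E y x" using assms unfolding finite_simple_graph_def by blast
  define S where "S = (\<Sum>x\<in>V. \<Sum>y\<in>V. if E x y then g y - g x else 0)"
  have 1: "(\<Sum>x\<in>V. laplacian V E g x) = S"
    unfolding S_def laplacian_def using fin by (simp add: sum.inter_filter)
  have "S = (\<Sum>y\<in>V. \<Sum>x\<in>V. if E x y then g y - g x else 0)"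
    unfolding S_def by (rule sum.swap)
  also have "\<dots> = (\<Sum>y\<in>V. \<Sum>x\<in>V. - (if E y x then g x - g y else 0))"
    by (intro sum.cong refl) (simp add: sym)
  also have "\<dots> = - S" unfolding S_def by (simp add: sum_negf)
  finally have "S = 0" by simp
  with 1 show ?thesis by simp
qed

lemma curv_le:
  assumes G: "finite_simple_graph V E"
    and curv: "\<And>x y. x \<in> V \<Longrightarrow> y \<in> V \<Longrightarrow> E x y \<Longrightarrow> ollivier_curvature V E x y \<ge> K"
    and xy: "x \<in> V" "y \<in> V" "E x y"
    and g1: "g y - g x = 1"
    and lip: "\<And>u v. E u v \<Longrightarrow> \<bar>g u - g v\<bar> \<le> 1"
  shows "K \<le> laplacian V E g x - laplacian V E g y"
proof -
  have fin: "finite V" using G unfolding finite_simple_graph_def by auto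
  have finM: "finite {\<bar>h u - h v\<bar> | u v. u \<in> V \<and> v \<in> V \<and> E u v}" for h :: "_ \<Rightarrow> real"
  proof -
    have "{\<bar>h u - h v\<bar> | u v. u \<in> V \<and> v \<in> V \<and> E u v} \<subseteq> (\<lambda>(u,v). \<bar>h u - h v\<bar>) ` (V \<times> V)"
      by auto
    then show ?thesis by (rule finite_subset) (use fin in simp)
  qed
  define A where "A = {laplacian V E f x - laplacian V E f y | f.
      f y - f x = 1 \<and> Max {\<bar>f u - f v\<bar> | u v. u \<in> V \<and> v \<in> V \<and> E u v} = 1}"
  have "Max {\<bar>g u - g v\<bar> | u v. u \<in> V \<and> v \<in> V \<and> E u v} = 1"
  proof (rule Max_eqI[OF finM])
    show "a \<le> 1" if "a \<in> {\<bar>g u - g v\<bar> | u v. u \<in> V \<and> v \<in> V \<and> E u v}" for a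
      using that lip by auto
    have "1 = \<bar>g x - g y\<bar>" using g1 by simp
    then have "\<exists>u v. 1 = \<bar>g u - g v\<bar> \<and> u \<in> V \<and> v \<in> V \<and> E u v"
      using xy by blast
    then show "1 \<in> {\<bar>g u - g v\<bar> | u v. u \<in> V \<and> v \<in> V \<and> E u v}"
      by simp
  qed
  then have mem: "laplacian V E g x - laplacian V E g y \<in> A" unfolding A_def using g1 by blast
  have bdd: "bdd_below A"
  proof (rule bdd_belowI)
    fix a assume "a \<in> A"
    then obtain f where a: "a = laplacian V E f x - laplacian V E f y"
      and M: "Max {\<bar>f u - f v\<bar> | u v. u \<in> V \<and> v \<in> V \<and> E u v} = 1"
      unfolding A_def by blast
    have l: "\<bar>f u - f v\<bar> \<le> 1" if "u \<in> V" "v \<in> V" "E u v" for u v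
    proof -
      have mM: "\<bar>f u - f v\<bar> \<in> {\<bar>f u - f v\<bar> | u v. u \<in> V \<and> v \<in> V \<and> E u v}" using that by blast
      show ?thesis using Max_ge[OF finM mM] M by simp
    qed
    have "laplacian V E f x \<ge> (\<Sum>w\<in>{w \<in> V. E x w}. -1)"
      unfolding laplacian_def
    proof (intro sum_mono)
      fix w assume "w \<in> {w \<in> V. E x w}"
      then have "\<bar>f x - f w\<bar> \<le> 1" using l xy(1) by blast
      then show "-1 \<le> f w - f x" by linarith
    qed
    moreover have "laplacian V E f y \<le> (\<Sum>w\<in>{w \<in> V. E y w}. 1)"
      unfolding laplacian_def
    proof (intro sum_mono)
      fix w assume "w \<in> {w \<in> V. E y w}"
      then have "\<bar>f y - f w\<bar> \<le> 1" using l xy(2) by blast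
      then show "f w - f y \<le> 1" by linarith
    qed
    ultimately show "- real (card {w \<in> V. E x w}) - real (card {w \<in> V. E y w}) \<le> a"
      unfolding a by simp
  qed
  have "Inf A \<le> laplacian V E g x - laplacian V E g y" by (rule cInf_lower[OF mem bdd])
  moreover have "ollivier_curvature V E x y = Inf A" by (simp add: ollivier_curvature_def A_def)
  ultimately have "ollivier_curvature V E x y \<le> laplacian V E g x - laplacian V E g y" by simp
  then show ?thesis using curv[OF xy] by linarith
qed

theorem theorem3p1:
  fixes V :: "'a set" and E :: "'a \<Rightarrow> 'a \<Rightarrow> bool" and K :: real
  assumes "finite_simple_graph V E"
    and "connected_graph V E"
    and "K > 0"
    and "\<And>x y. x \<in> V \<Longrightarrow> y \<in> V \<Longrightarrow> E x y \<Longrightarrow> ollivier_curvature V E x y \<ge> K"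
  shows "diam_eff V E \<le> real (Max (Deg V E ` V)) / K"
proof -
  note G = assms(1) and C = assms(2)
  have fin: "finite V" using G unfolding finite_simple_graph_def by auto
  have inV: "\<And>u v. E u v \<Longrightarrow> u \<in> V \<and> v \<in> V" using G unfolding finite_simple_graph_def by blast
  have sym: "\<And>u v. E u v \<Longrightarrow> E v u" using G unfolding finite_simple_graph_def by blast
  have Vne: "V \<noteq> {}" using C unfolding connected_graph_def by auto
  define f where "f z w = - real (gdist E w z)" for z w
  have lip: "\<bar>f z u - f z v\<bar> \<le> 1" if "z \<in> V" "E u v" for z u v
  proof -
    have "gdist E u z \<le> gdist E v z + 1" using gdist_edge[OF C that(2)] inV[OF that(2)] that(1) by auto
    moreover have "gdist E v z \<le> gdist E u z + 1"
      using gdist_edge[OF C sym[OF that(2)]] inV[OF that(2)] that(1) by auto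
    ultimately show ?thesis unfolding f_def by linarith
  qed
  have ind: "\<forall>x\<in>V. gdist E x z = n \<longrightarrow>
      real n * K \<le> laplacian V E (f z) x - laplacian V E (f z) z" if z: "z \<in> V" for z n
  proof (induction n)
    case 0
    then show ?case using gdist_zero[OF C _ z] by auto
  next
    case (Suc m)
    show ?case
    proof (intro ballI impI)
      fix x assume x: "x \<in> V" and d: "gdist E x z = Suc m"
      obtain x1 where e: "E x x1" and d1: "gdist E x1 z = m"
        using gdist_step[OF G C x z d] by blast
      have x1: "x1 \<in> V" using inV[OF e] by auto
      have "K \<le> laplacian V E (f z) x - laplacian V E (f z) x1"
        by (rule curv_le[OF G assms(4) x x1 e]) (use d d1 lip z in \<open>auto simp: f_def\<close>)
      moreover have "real m * K \<le> laplacian V E (f z) x1 - laplacian V E (f z) z"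
        using Suc x1 d1 by auto
      ultimately show "real (Suc m) * K \<le> laplacian V E (f z) x - laplacian V E (f z) z"
        by (simp add: algebra_simps)
    qed
  qed
  have lapz: "laplacian V E (f z) z \<ge> - real (Deg V E z)" if z: "z \<in> V" for z
  proof -
    have "laplacian V E (f z) z \<ge> (\<Sum>w\<in>{w \<in> V. E z w}. -1)"
      unfolding laplacian_def
    proof (intro sum_mono)
      fix w assume "w \<in> {w \<in> V. E z w}"
      then have "\<bar>f z z - f z w\<bar> \<le> 1" using lip z by auto
      then show "-1 \<le> f z w - f z z" by linarith
    qed
    then show ?thesis unfolding Deg_def by simp
  qed
  define D where "D = Max (Deg V E ` V)"
  have DegD: "Deg V E z \<le> D" if "z \<in> V" for z
    unfolding D_def using fin that by (intro Max_ge) auto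
  have one: "K * (\<Sum>x\<in>V. real (gdist E x z)) \<le> real (card V) * real D" if z: "z \<in> V" for z
  proof -
    have "K * (\<Sum>x\<in>V. real (gdist E x z)) = (\<Sum>x\<in>V. real (gdist E x z) * K)"
      by (simp add: sum_distrib_left mult.commute)
    also have "\<dots> \<le> (\<Sum>x\<in>V. laplacian V E (f z) x + real (Deg V E z))"
    proof (intro sum_mono)
      fix x assume "x \<in> V"
      then show "real (gdist E x z) * K \<le> laplacian V E (f z) x + real (Deg V E z)"
        using ind[OF z, of "gdist E x z"] lapz[OF z] by auto
    qed
    also have "\<dots> = real (card V) * real (Deg V E z)"
      using laplacian_sum_zero[OF G, of "f z"] by (simp add: sum.distrib)
    also have "\<dots> \<le> real (card V) * real D" using DegD[OF z] by (intro mult_left_mono) auto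
    finally show ?thesis .
  qed
  have "K * (\<Sum>z\<in>V. \<Sum>x\<in>V. real (gdist E x z)) = (\<Sum>z\<in>V. K * (\<Sum>x\<in>V. real (gdist E x z)))"
    by (simp add: sum_distrib_left)
  also have "\<dots> \<le> (\<Sum>z\<in>V. real (card V) * real D)" using one by (intro sum_mono) auto
  also have "\<dots> = real (card V) ^ 2 * real D" by (simp add: power2_eq_square)
  finally have T: "K * (\<Sum>x\<in>V. \<Sum>z\<in>V. real (gdist E x z)) \<le> real (card V) ^ 2 * real D"
    by (subst sum.swap) simp
  have cpos: "real (card V) ^ 2 > 0" using fin Vne by (simp add: card_gt_0_iff)
  have "diam_eff V E = (\<Sum>x\<in>V. \<Sum>z\<in>V. real (gdist E x z)) / real (card V) ^ 2"
    unfolding diam_eff_def by simp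
  also have "\<dots> \<le> real D / K"
    using T cpos assms(3) by (simp add: divide_simps mult.commute)
  finally show ?thesis unfolding D_def .
qed

end
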